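(* For every collection $A$, the set of pure Nash equilibrium outcomes of the game $\Gamma_{\mathcal{CUDD}}(A)$ is exactly $AG(A)\cup DIS(A)$, where $$AG(A)=\Big\{a\in A:\ a_i\ge\tfrac{\overline{m}_i+\underline{m}_i}{2}\text{ for } i=1,2\Big\},\qquad DIS(A)=\Big\{\tfrac{b+c}{2}:\ b\in A^1_{max},\ c\in A^2_{max}\Big\}.$$
   Context: Two players bargain over a collection (multiset) $A=(a^k)_{k\in[n]}$, $a^k=(a^k_1,a^k_2)\in[0,1]^2$, $a^k_i$ being player $i$'s utility; players are risk neutral and the outcome of a profile is the vector of expected utilities. Mechanism $\mathcal{CUDD}$ (coordination with uniform dictatorial disagreement): each player $i$ submits a pair $(g_i,d_i)\in[n]^2$; if $g_1=g_2$ the chosen index is $g_1$, otherwise the index is uniform over $\{d_1,d_2\}$ (i.e., each of $d_1,d_2$ with probability $1/2$, so $d_1$ with probability 1 if $d_1=d_2$). $\overline{m}_i=\max_k a^k_i$, $\underline{m}_i=\min_k a^k_i$, and $A^i_{max}=\{a^k\in A: a^k_i=\overline{m}_i\}$. *)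

theory Defs
  imports Complex_Main
begin

text \<open>A collection A = (a^k)_{k in [n]} is a function a :: nat => real * real on the
  index set [n] = {1..n}; fst (a k) / snd (a k) are the utilities of players 1 / 2.
  A strategy of a player is a pair (g, d) in [n] x [n].\<close>

definition util :: "(nat \<Rightarrow> real \<times> real) \<Rightarrow> nat \<Rightarrow> nat \<Rightarrow> real" where
  "util a i k = (if i = 1 then fst (a k) else snd (a k))"

definition strategies :: "nat \<Rightarrow> (nat \<times> nat) set" where
  "strategies n = {1..n} \<times> {1..n}"

text \<open>Expected utility of player i under CUDD when player 1 plays s1=(g1,d1) and
  player 2 plays s2=(g2,d2): if g1 = g2 the index g1 is chosen, otherwise the index is
  uniform over d1, d2 (each with probability 1/2).\<close>
definition cudd_payoff ::
  "(nat \<Rightarrow> real \<times> real) \<Rightarrow> nat \<Rightarrow> nat \<times> nat \<Rightarrow> nat \<times> nat \<Rightarrow> real" where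
  "cudd_payoff a i s1 s2 =
     (if fst s1 = fst s2 then util a i (fst s1)
      else (util a i (snd s1) + util a i (snd s2)) / 2)"

definition cudd_outcome ::
  "(nat \<Rightarrow> real \<times> real) \<Rightarrow> nat \<times> nat \<Rightarrow> nat \<times> nat \<Rightarrow> real \<times> real" where
  "cudd_outcome a s1 s2 = (cudd_payoff a 1 s1 s2, cudd_payoff a 2 s1 s2)"

definition cudd_nash :: "(nat \<Rightarrow> real \<times> real) \<Rightarrow> nat \<Rightarrow> nat \<times> nat \<Rightarrow> nat \<times> nat \<Rightarrow> bool" where
  "cudd_nash a n s1 s2 \<longleftrightarrow>
     s1 \<in> strategies n \<and> s2 \<in> strategies n \<and>
     (\<forall>t \<in> strategies n. cudd_payoff a 1 t s2 \<le> cudd_payoff a 1 s1 s2) \<and>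
     (\<forall>t \<in> strategies n. cudd_payoff a 2 s1 t \<le> cudd_payoff a 2 s1 s2)"

definition max_util :: "(nat \<Rightarrow> real \<times> real) \<Rightarrow> nat \<Rightarrow> nat \<Rightarrow> real" where
  "max_util a n i = Max (util a i ` {1..n})"

definition min_util :: "(nat \<Rightarrow> real \<times> real) \<Rightarrow> nat \<Rightarrow> nat \<Rightarrow> real" where
  "min_util a n i = Min (util a i ` {1..n})"

definition AG :: "(nat \<Rightarrow> real \<times> real) \<Rightarrow> nat \<Rightarrow> (real \<times> real) set" where
  "AG a n = {a k | k. k \<in> {1..n} \<and>
      (\<forall>i \<in> {1, 2}. util a i k \<ge> (max_util a n i + min_util a n i) / 2)}"

definition DIS :: "(nat \<Rightarrow> real \<times> real) \<Rightarrow> nat \<Rightarrow> (real \<times> real) set" where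
  "DIS a n = {((fst (a b) + fst (a c)) / 2, (snd (a b) + snd (a c)) / 2) | b c.
      b \<in> {1..n} \<and> c \<in> {1..n} \<and>
      util a 1 b = max_util a n 1 \<and> util a 2 c = max_util a n 2}"

end

theory Submission
  imports Defs
begin

lemma le_max: "k \<in> {1..n} \<Longrightarrow> util a i k \<le> max_util a n i"
  unfolding max_util_def by (rule Max_ge) auto

lemma ge_min: "k \<in> {1..n} \<Longrightarrow> min_util a n i \<le> util a i k"
  unfolding min_util_def by (rule Min_le) auto

lemma max_ex: "n \<ge> 1 \<Longrightarrow> \<exists>k\<in>{1..n}. util a i k = max_util a n i"
proof -
  assume "n \<ge> 1"
  then have "max_util a n i \<in> util a i ` {1..n}"
    unfolding max_util_def by (intro Max_in) auto
  then show ?thesis by force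
qed

lemma min_ex: "n \<ge> 1 \<Longrightarrow> \<exists>k\<in>{1..n}. util a i k = min_util a n i"
proof -
  assume "n \<ge> 1"
  then have "min_util a n i \<in> util a i ` {1..n}"
    unfolding min_util_def by (intro Min_in) auto
  then show ?thesis by force
qed

lemma one_case: "max_util a 1 i = util a i 1" "min_util a 1 i = util a i 1"
  unfolding max_util_def min_util_def by auto

lemma u12: "util a 1 k = fst (a k)" "util a 2 k = snd (a k)"
  by (auto simp: util_def)

theorem proposition5:
  fixes a :: "nat \<Rightarrow> real \<times> real" and n :: nat
  assumes "n \<ge> 1"
    and "\<forall>k \<in> {1..n}. fst (a k) \<in> {0..1} \<and> snd (a k) \<in> {0..1}"
  shows "{cudd_outcome a s1 s2 | s1 s2. cudd_nash a n s1 s2} = AG a n \<union> DIS a n"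
    (is "?L = ?R")
proof
  show "?L \<subseteq> ?R"
  proof
    fix x assume "x \<in> ?L"
    then obtain s1 s2 where x: "x = cudd_outcome a s1 s2" and N: "cudd_nash a n s1 s2" by blast
    obtain g1 d1 g2 d2 where s: "s1 = (g1,d1)" "s2 = (g2,d2)" by (cases s1, cases s2) auto
    from N s have inn: "g1 \<in> {1..n}" "d1 \<in> {1..n}" "g2 \<in> {1..n}" "d2 \<in> {1..n}"
      by (auto simp: cudd_nash_def strategies_def)
    from N have dev1: "\<And>t. t \<in> strategies n \<Longrightarrow> cudd_payoff a 1 t s2 \<le> cudd_payoff a 1 s1 s2"
      and dev2: "\<And>t. t \<in> strategies n \<Longrightarrow> cudd_payoff a 2 s1 t \<le> cudd_payoff a 2 s1 s2"
      by (auto simp: cudd_nash_def)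
    obtain j1 where j1: "j1 \<in> {1..n}" "util a 1 j1 = max_util a n 1" using max_ex[OF assms(1)] by blast
    obtain j2 where j2: "j2 \<in> {1..n}" "util a 2 j2 = max_util a n 2" using max_ex[OF assms(1)] by blast
    show "x \<in> ?R"
    proof (cases "g1 = g2")
      case True
      have xa: "x = a g1" using True by (simp add: x s cudd_outcome_def cudd_payoff_def u12 util_def)
      have c: "util a 1 g1 \<ge> (max_util a n 1 + min_util a n 1) / 2 \<and>
               util a 2 g1 \<ge> (max_util a n 2 + min_util a n 2) / 2"
      proof (cases "n = 1")
        case True
        have "g1 = 1" using inn True by auto
        then show ?thesis unfolding True one_case by simp
      next
        case False
        define g' where "g' = (if g1 = 1 then 2 else (1::nat))"
        have g': "g' \<in> {1..n}" "g' \<noteq> g1" using False assms(1) by (auto simp: g'_def)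
        have "cudd_payoff a 1 (g', j1) s2 \<le> cudd_payoff a 1 s1 s2"
          using dev1 g' j1 by (auto simp: strategies_def)
        then have A: "(max_util a n 1 + util a 1 d2)/2 \<le> util a 1 g1"
          using g' True j1 by (simp add: s cudd_payoff_def)
        have "cudd_payoff a 2 s1 (g', j2) \<le> cudd_payoff a 2 s1 s2"
          using dev2 g' j2 by (auto simp: strategies_def)
        then have B: "(util a 2 d1 + max_util a n 2)/2 \<le> util a 2 g1"
          using g' True j2 by (simp add: s cudd_payoff_def)
        show ?thesis using A B ge_min[OF inn(4), of a 1] ge_min[OF inn(2), of a 2] by argo
      qed
      have "x \<in> AG a n" unfolding AG_def using xa c inn by auto
      then show ?thesis by blast
    next
      case False
      have "cudd_payoff a 1 (g1, j1) s2 \<le> cudd_payoff a 1 s1 s2"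
        using dev1 inn j1 by (auto simp: strategies_def)
      then have "util a 1 j1 \<le> util a 1 d1" using False by (simp add: s cudd_payoff_def)
      then have e1: "util a 1 d1 = max_util a n 1" using j1 le_max[OF inn(2), of a 1] by linarith
      have "cudd_payoff a 2 s1 (g2, j2) \<le> cudd_payoff a 2 s1 s2"
        using dev2 inn j2 by (auto simp: strategies_def)
      then have "util a 2 j2 \<le> util a 2 d2" using False by (simp add: s cudd_payoff_def)
      then have e2: "util a 2 d2 = max_util a n 2" using j2 le_max[OF inn(4), of a 2] by linarith
      have "x = ((fst (a d1) + fst (a d2)) / 2, (snd (a d1) + snd (a d2)) / 2)"
        using False by (simp add: x s cudd_outcome_def cudd_payoff_def u12 util_def)
      then have "x \<in> DIS a n" unfolding DIS_def using e1 e2 inn by blast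
      then show ?thesis by blast
    qed
  qed
next
  have AGc: "a k \<in> ?L" if k: "k \<in> {1..n}"
      and c1: "util a 1 k \<ge> (max_util a n 1 + min_util a n 1) / 2"
      and c2: "util a 2 k \<ge> (max_util a n 2 + min_util a n 2) / 2" for k
  proof -
    obtain j1 where j1: "j1 \<in> {1..n}" "util a 1 j1 = min_util a n 1" using min_ex[OF assms(1)] by blast
    obtain j2 where j2: "j2 \<in> {1..n}" "util a 2 j2 = min_util a n 2" using min_ex[OF assms(1)] by blast
    have N: "cudd_nash a n (k, j2) (k, j1)"
      unfolding cudd_nash_def
    proof (intro conjI ballI)
      show "(k, j2) \<in> strategies n" "(k, j1) \<in> strategies n"
        using k j1 j2 by (auto simp: strategies_def)
    next
      fix t assume t: "t \<in> strategies n"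
      obtain g d where td: "t = (g, d)" by (cases t)
      have d: "d \<in> {1..n}" using t td by (auto simp: strategies_def)
      show "cudd_payoff a 1 t (k, j1) \<le> cudd_payoff a 1 (k, j2) (k, j1)"
        using le_max[OF d, of a 1] c1 j1 by (auto simp: td cudd_payoff_def)
    next
      fix t assume t: "t \<in> strategies n"
      obtain g d where td: "t = (g, d)" by (cases t)
      have d: "d \<in> {1..n}" using t td by (auto simp: strategies_def)
      show "cudd_payoff a 2 (k, j2) t \<le> cudd_payoff a 2 (k, j2) (k, j1)"
        using le_max[OF d, of a 2] c2 j2 by (auto simp: td cudd_payoff_def)
    qed
    have "cudd_outcome a (k, j2) (k, j1) = a k"
      by (simp add: cudd_outcome_def cudd_payoff_def u12 util_def)
    then show ?thesis using N by (metis (mono_tags, lifting) mem_Collect_eq)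
  qed
  show "?R \<subseteq> ?L"
  proof
    fix x assume "x \<in> ?R"
    then show "x \<in> ?L"
    proof
      assume "x \<in> AG a n"
      then obtain k where "x = a k" "k \<in> {1..n}"
        "\<forall>i \<in> {1, 2}. util a i k \<ge> (max_util a n i + min_util a n i) / 2"
        unfolding AG_def by blast
      then show ?thesis using AGc by auto
    next
      assume "x \<in> DIS a n"
      then obtain b c where x: "x = ((fst (a b) + fst (a c)) / 2, (snd (a b) + snd (a c)) / 2)"
        and bc: "b \<in> {1..n}" "c \<in> {1..n}"
        and e1: "util a 1 b = max_util a n 1" and e2: "util a 2 c = max_util a n 2"
        unfolding DIS_def by blast
      show ?thesis
      proof (cases "b = c")
        case True
        have "x = a b" using True x by (simp add: prod_eq_iff)
        moreover have "min_util a n 1 \<le> util a 1 b" "min_util a n 2 \<le> util a 2 b"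
          using ge_min bc by auto
        ultimately show ?thesis using AGc[OF bc(1)] e1 e2 True by auto
      next
        case False
        have N: "cudd_nash a n (b, b) (c, c)"
          unfolding cudd_nash_def
        proof (intro conjI ballI)
          show "(b, b) \<in> strategies n" "(c, c) \<in> strategies n"
            using bc by (auto simp: strategies_def)
        next
          fix t assume t: "t \<in> strategies n"
          obtain g d where td: "t = (g, d)" by (cases t)
          have d: "d \<in> {1..n}" using t td by (auto simp: strategies_def)
          show "cudd_payoff a 1 t (c, c) \<le> cudd_payoff a 1 (b, b) (c, c)"
            using le_max[OF d, of a 1] le_max[OF bc(2), of a 1] e1 False
            by (auto simp: td cudd_payoff_def)
        next
          fix t assume t: "t \<in> strategies n"
          obtain g d where td: "t = (g, d)" by (cases t)
          have d: "d \<in> {1..n}" using t td by (auto simp: strategies_def)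
          show "cudd_payoff a 2 (b, b) t \<le> cudd_payoff a 2 (b, b) (c, c)"
            using le_max[OF d, of a 2] le_max[OF bc(1), of a 2] e2 False
            by (auto simp: td cudd_payoff_def)
        qed
        have "cudd_outcome a (b, b) (c, c) = x"
          using False by (simp add: x cudd_outcome_def cudd_payoff_def u12 util_def)
        then show ?thesis using N by blast
      qed
    qed
  qed
qed

end
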